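(* Let $0\le q\in L_1^{loc}(\mathbb{R})$ with $\int_{-\infty}^{\infty}q(t)\,dt=\infty$, and for $x\in\mathbb{R}$ let $d(x)=\inf\{d>0:\int_{x-d}^{x+d}q(t)\,dt=2\}$. Then the condition $$\lim_{|x|\to\infty}\int_{x-a}^{x+a}q(t)\,dt=\infty\quad\text{for all }a\in(0,\infty)$$ is equivalent to the condition $\lim_{|x|\to\infty}d(x)=0$. *)

theory Defs
  imports "HOL-Analysis.Analysis"
begin

definition dfun :: "(real \<Rightarrow> real) \<Rightarrow> real \<Rightarrow> real" where
  "dfun q x = Inf {d. d > 0 \<and> (LINT t:{x-d..x+d}|lborel. q t) = 2}"

end

theory Submission
  imports Defs
begin

lemma G_mono:
  fixes q :: "real \<Rightarrow> real"
  assumes nn: "\<And>t. q t \<ge> 0" and ii: "\<And>a b. q integrable_on {a..b}"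
    and "u' \<le> u" "v \<le> v'"
  shows "integral {u..v} q \<le> integral {u'..v'} q"
  by (rule integral_subset_le) (use assms in auto)

lemma G_cont:
  fixes q :: "real \<Rightarrow> real"
  assumes ii: "\<And>a b. q integrable_on {a..b}" and D: "D \<ge> 0"
  shows "continuous_on {0..D} (\<lambda>d. integral {x-d..x+d} q)"
proof -
  define P where "P u = integral {x-D..u} q" for u
  have cP: "continuous_on {x-D..x+D} P"
    unfolding P_def by (rule indefinite_integral_continuous_1[OF ii])
  have eq: "integral {x-d..x+d} q = P (x+d) - P (x-d)" if "d \<in> {0..D}" for d
  proof -
    have "integral {x-D..x+d} q = integral {x-D..x-d} q + integral {x-d..x+d} q"
      using Henstock_Kurzweil_Integration.integral_combine[where a="x-D" and c="x-d" and b="x+d" and f=q] that ii by auto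
    then show ?thesis unfolding P_def by simp
  qed
  have c1: "continuous_on {0..D} (\<lambda>d. P (x+d))"
    by (rule continuous_on_compose2[OF cP]) (auto intro!: continuous_intros)
  have c2: "continuous_on {0..D} (\<lambda>d. P (x-d))"
    by (rule continuous_on_compose2[OF cP]) (auto intro!: continuous_intros)
  show ?thesis
    using continuous_on_diff[OF c1 c2] by (rule continuous_on_eq) (use eq in auto)
qed

lemma G_ivt:
  fixes q :: "real \<Rightarrow> real"
  assumes ii: "\<And>a b. q integrable_on {a..b}" and e: "e > 0"
    and big: "integral {x-e..x+e} q \<ge> 2"
  shows "\<exists>d. 0 < d \<and> d \<le> e \<and> integral {x-d..x+d} q = 2"
proof -
  have "\<exists>d. 0 \<le> d \<and> d \<le> e \<and> integral {x-d..x+d} q = 2"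
    by (rule IVT'[where f="\<lambda>d. integral {x-d..x+d} q"]) (use big e G_cont[OF ii, of e x] in auto)
  then obtain d where "0 \<le> d" "d \<le> e" "integral {x-d..x+d} q = 2" by blast
  moreover have "d \<noteq> 0" using calculation by auto
  ultimately show ?thesis by (intro exI[of _ d]) auto
qed

lemma G_unbounded:
  fixes q :: "real \<Rightarrow> real"
  assumes nn: "\<And>t. q t \<ge> 0" and si: "\<And>a b. set_integrable lborel {a..b} q"
    and infint: "(\<integral>\<^sup>+ t. ennreal (q t) \<partial>lborel) = \<infinity>"
  shows "\<exists>n::nat. integral {x - real n..x + real n} q \<ge> 2"
proof (rule ccontr)
  assume "\<not> ?thesis"
  then have lt: "integral {x - real n..x + real n} q < 2" for n using not_le by blast
  define f where "f n t = ennreal (indicator {x - real n..x + real n} t * q t)" for n t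
  have inc: "incseq f"
    unfolding f_def incseq_def le_fun_def
    by (auto intro!: ennreal_leI mult_right_mono simp: indicator_def nn)
  have meas: "f i \<in> borel_measurable lborel" for i
    unfolding f_def using borel_measurable_integrable[OF si[unfolded set_integrable_def]] by auto
  have sup: "(SUP i. f i t) = ennreal (q t)" for t
  proof (rule antisym)
    show "(SUP i. f i t) \<le> ennreal (q t)"
      by (rule SUP_least) (auto simp: f_def indicator_def nn)
    have "f (nat \<lceil>\<bar>t - x\<bar>\<rceil>) t = ennreal (q t)"
      unfolding f_def by (auto simp: indicator_def abs_le_iff, linarith+)
    then show "ennreal (q t) \<le> (SUP i. f i t)"
      by (metis SUP_upper UNIV_I)
  qed
  have fi: "integral\<^sup>N lborel (f i) = ennreal (integral {x - real i..x + real i} q)" for i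
  proof -
    have "integral\<^sup>N lborel (f i) = ennreal (LINT t:{x - real i..x + real i}|lborel. q t)"
    proof -
      have int: "integrable lborel (\<lambda>t. indicator {x - real i..x + real i} t * q t)"
        using si[unfolded set_integrable_def] by simp
      have "integral\<^sup>N lborel (f i) = ennreal (LBINT t. indicator {x - real i..x + real i} t * q t)"
        unfolding f_def by (rule nn_integral_eq_integral[OF int]) (use nn in auto)
      then show ?thesis by (simp add: set_lebesgue_integral_def)
    qed
    then show ?thesis using set_borel_integral_eq_integral(2)[OF si] by simp
  qed
  have "(\<integral>\<^sup>+ t. ennreal (q t) \<partial>lborel) = (SUP i. integral\<^sup>N lborel (f i))"
    using nn_integral_monotone_convergence_SUP[OF inc meas] sup by simp
  also have "\<dots> \<le> 2"
    by (rule SUP_least) (use lt in \<open>auto simp: fi intro!: ennreal_leI less_imp_le\<close>)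
  finally show False using infint by (simp add: top_unique)
qed

lemma tile:
  fixes q :: "real \<Rightarrow> real"
  assumes ii: "\<And>a b. q integrable_on {a..b}" and dpos: "\<delta> > 0"
    and loc: "\<And>y. y \<in> {c..c + 2 * real N * \<delta>} \<Longrightarrow> integral {y-\<delta>..y+\<delta>} q \<ge> 2"
  shows "m \<le> N \<Longrightarrow> integral {c..c + 2 * real m * \<delta>} q \<ge> 2 * real m"
proof (induction m)
  case 0
  then show ?case by simp
next
  case (Suc m)
  define y where "y = c + (2 * real m + 1) * \<delta>"
  have yin: "y \<in> {c..c + 2 * real N * \<delta>}"
  proof -
    have "(2 * real m + 1) * \<delta> \<le> 2 * real N * \<delta>"
      using Suc.prems dpos by (intro mult_right_mono) auto
    then show ?thesis unfolding y_def using dpos by auto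
  qed
  have e1: "c + 2 * real (Suc m) * \<delta> = y + \<delta>" "c + 2 * real m * \<delta> = y - \<delta>"
    unfolding y_def by (auto simp: algebra_simps)
  have "integral {c..y-\<delta>} q + integral {y-\<delta>..y+\<delta>} q = integral {c..y+\<delta>} q"
    by (rule Henstock_Kurzweil_Integration.integral_combine)
       (use dpos e1 in \<open>auto intro: ii simp: y_def\<close>)
  moreover have "integral {c..y-\<delta>} q \<ge> 2 * real m"
    using Suc e1 by auto
  moreover have "integral {y-\<delta>..y+\<delta>} q \<ge> 2" by (rule loc[OF yin])
  ultimately have "integral {c..y+\<delta>} q \<ge> 2 * real m + 2" by linarith
  moreover have "2 * real (Suc m) = 2 * real m + 2" by simp
  ultimately show ?case unfolding e1(1) by linarith
qed

theorem lemma1p1: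
  fixes q :: "real \<Rightarrow> real"
  assumes nonneg: "\<And>t. q t \<ge> 0"
    and locint: "\<And>a b. set_integrable lborel {a..b} q"
    and infint: "(\<integral>\<^sup>+ t. ennreal (q t) \<partial>lborel) = \<infinity>"
  shows "(\<forall>a>0. filterlim (\<lambda>x. LINT t:{x-a..x+a}|lborel. q t) at_top at_infinity)
     \<longleftrightarrow> (dfun q \<longlongrightarrow> 0) at_infinity"
proof -
  have ii: "\<And>a b. q integrable_on {a..b}"
    using set_borel_integral_eq_integral(1)[OF locint] by blast
  have eqI: "\<And>x a. (LINT t:{x-a..x+a}|lborel. q t) = integral {x-a..x+a} q"
    using set_borel_integral_eq_integral(2)[OF locint] by blast
  define S where "S x = {d. d > 0 \<and> integral {x-d..x+d} q = 2}" for x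
  have dq: "dfun q x = Inf (S x)" for x by (simp add: dfun_def S_def eqI)
  have ne: "S x \<noteq> {}" for x
  proof -
    obtain n :: nat where n: "integral {x - real n..x + real n} q \<ge> 2"
      using G_unbounded[OF nonneg locint infint] by blast
    have "n \<noteq> 0" using n by (cases "n = 0") auto
    then obtain d where "0 < d" "d \<le> real n" "integral {x-d..x+d} q = 2"
      using G_ivt[OF ii _ n] by auto
    then show ?thesis unfolding S_def by auto
  qed
  have bdd: "bdd_below (S x)" for x unfolding S_def bdd_below_def by (intro exI[of _ 0]) auto
  have dnn: "0 \<le> dfun q x" for x
    unfolding dq by (rule cInf_greatest[OF ne]) (auto simp: S_def)
  have upper: "d \<in> S x \<Longrightarrow> dfun q x \<le> d" for x d
    unfolding dq by (rule cInf_lower[OF _ bdd])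
  have lowerkey: "integral {x-\<delta>..x+\<delta>} q \<ge> 2" if "dfun q x < \<delta>" for x \<delta>
  proof -
    have "Inf (S x) < \<delta>" using that dq by simp
    then obtain d where d: "d \<in> S x" "d < \<delta>"
      using cInf_less_iff[OF ne bdd] by blast
    then have "integral {x-d..x+d} q = 2" by (auto simp: S_def)
    moreover have "integral {x-d..x+d} q \<le> integral {x-\<delta>..x+\<delta>} q"
      by (rule G_mono[OF nonneg ii]) (use d in auto)
    ultimately show ?thesis by simp
  qed
  show ?thesis
  proof
    assume A: "\<forall>a>0. filterlim (\<lambda>x. LINT t:{x-a..x+a}|lborel. q t) at_top at_infinity"
    show "(dfun q \<longlongrightarrow> 0) at_infinity"
    proof (rule tendstoI)
      fix e :: real assume e: "e > 0"
      have "filterlim (\<lambda>x. integral {x-e/2..x+e/2} q) at_top at_infinity"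
        using A e by (simp add: eqI)
      then have "eventually (\<lambda>x. 2 \<le> integral {x-e/2..x+e/2} q) at_infinity"
        by (simp add: filterlim_at_top)
      then show "eventually (\<lambda>x. dist (dfun q x) 0 < e) at_infinity"
      proof (rule eventually_mono)
        fix x assume "2 \<le> integral {x-e/2..x+e/2} q"
        then obtain d where "0 < d" "d \<le> e/2" "integral {x-d..x+d} q = 2"
          using G_ivt[OF ii, of "e/2" x] e by auto
        then have "dfun q x \<le> e/2" using upper[of d x] by (auto simp: S_def)
        then show "dist (dfun q x) 0 < e" using dnn[of x] e by simp
      qed
    qed
  next
    assume T: "(dfun q \<longlongrightarrow> 0) at_infinity"
    show "\<forall>a>0. filterlim (\<lambda>x. LINT t:{x-a..x+a}|lborel. q t) at_top at_infinity"
    proof (intro allI impI)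
      fix a :: real assume a: "a > 0"
      have "filterlim (\<lambda>x. integral {x-a..x+a} q) at_top at_infinity"
        unfolding filterlim_at_top
      proof
        fix Z :: real
        define N where "N = nat \<lceil>Z\<rceil> + 1"
        have N1: "real N \<ge> 1" unfolding N_def by simp
        have "Z \<le> real (nat \<lceil>Z\<rceil>)" by (rule real_nat_ceiling_ge)
        then have NZ: "2 * real N \<ge> Z" unfolding N_def by simp
        define \<delta> where "\<delta> = a / real N"
        have dpos: "\<delta> > 0" unfolding \<delta>_def using a N1 by auto
        have Nd: "2 * real N * \<delta> = 2 * a" unfolding \<delta>_def using N1 by auto
        have "eventually (\<lambda>x. dist (dfun q x) 0 < \<delta>) at_infinity"
          using tendstoD[OF T dpos] .
        then obtain R where R: "\<And>y. R \<le> norm y \<Longrightarrow> dist (dfun q y) 0 < \<delta>"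
          unfolding eventually_at_infinity by blast
        have loc2: "integral {y-\<delta>..y+\<delta>} q \<ge> 2" if "R \<le> \<bar>y\<bar>" for y
          using R[of y] that by (intro lowerkey) auto
        show "eventually (\<lambda>x. Z \<le> integral {x-a..x+a} q) at_infinity"
          unfolding eventually_at_infinity
        proof (intro exI allI impI)
          fix x :: real assume x: "R + a \<le> norm x"
          have loc: "integral {y-\<delta>..y+\<delta>} q \<ge> 2" if "y \<in> {x-a..x-a + 2 * real N * \<delta>}" for y
            using that x Nd by (intro loc2) auto
          have "integral {x-a..x-a + 2 * real N * \<delta>} q \<ge> 2 * real N"
            by (rule tile[OF ii dpos loc]) auto
          moreover have "x-a + 2 * real N * \<delta> = x + a" using Nd by simp
          ultimately show "Z \<le> integral {x-a..x+a} q" using NZ by simp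
        qed
      qed
      then show "filterlim (\<lambda>x. LINT t:{x-a..x+a}|lborel. q t) at_top at_infinity"
        by (simp add: eqI)
    qed
  qed
qed

end
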